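(* Let $V$ be a complex vector space with a quadratic form $f$, and let $V=V_0\supset V_1\supset V_2\supset\cdots$ be a descending chain of subspaces with $\dim_{\mathbb{C}}(V/V_i)<\infty$ for all $i\ge0$ and $\bigcap_{i\ge0}V_i=(0)$. For each $i$, let $Cl(V_i)$ denote the subalgebra of the Clifford algebra $Cl(V,f)$ generated by $1$ and $V_i$ (i.e. $Cl(V_i,f|_{V_i})$). Then $$\bigcap_{i\ge0}Cl(V_i)=\mathbb{C}\cdot1.$$
   Context: A quadratic form on $V$ is a map $f:V\to\mathbb{C}$ with $f(\alpha v)=\alpha^2f(v)$ such that $f(u,v)=f(u+v)-f(u)-f(v)$ is bilinear. The Clifford algebra $Cl(V,f)$ is the unital associative algebra generated by $V$ and $1$ subject to $v^2=f(v)\cdot1$ for $v\in V$. *)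

theory Defs
  imports Complex_Main
begin

text \<open>
  The Clifford algebra Cl(V,f) is constructed concretely as
  the quotient of the free associative algebra on the set V (finitely supported
  functions 'v list => complex, words = noncommutative monomials) by the two-sided
  ideal generated by the linearity relations and the Clifford relations v v = f(v) 1.
\<close>

definition quadratic_form :: "(complex \<Rightarrow> 'v \<Rightarrow> 'v) \<Rightarrow> ('v::ab_group_add \<Rightarrow> complex) \<Rightarrow> bool" where
  "quadratic_form scale f \<longleftrightarrow>
     (\<forall>a v. f (scale a v) = a^2 * f v) \<and>
     (let B = (\<lambda>u v. f (u + v) - f u - f v) in
        (\<forall>u1 u2 v. B (u1 + u2) v = B u1 v + B u2 v) \<and>
        (\<forall>a u v. B (scale a u) v = a * B u v) \<and>
        (\<forall>u v1 v2. B u (v1 + v2) = B u v1 + B u v2) \<and>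
        (\<forall>a u v. B u (scale a v) = a * B u v))"

definition fin_supp :: "('v list \<Rightarrow> complex) \<Rightarrow> bool" where
  "fin_supp p \<longleftrightarrow> finite {w. p w \<noteq> 0}"

definition word :: "'v list \<Rightarrow> 'v list \<Rightarrow> complex" where
  "word w = (\<lambda>u. if u = w then 1 else 0)"

definition fmul :: "('v list \<Rightarrow> complex) \<Rightarrow> ('v list \<Rightarrow> complex) \<Rightarrow> 'v list \<Rightarrow> complex" where
  "fmul p q = (\<lambda>w. \<Sum>k\<le>length w. p (take k w) * q (drop k w))"

definition fadd :: "('v list \<Rightarrow> complex) \<Rightarrow> ('v list \<Rightarrow> complex) \<Rightarrow> 'v list \<Rightarrow> complex" where
  "fadd p q = (\<lambda>w. p w + q w)"

definition fsmult :: "complex \<Rightarrow> ('v list \<Rightarrow> complex) \<Rightarrow> 'v list \<Rightarrow> complex" where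
  "fsmult c p = (\<lambda>w. c * p w)"

definition fsub :: "('v list \<Rightarrow> complex) \<Rightarrow> ('v list \<Rightarrow> complex) \<Rightarrow> 'v list \<Rightarrow> complex" where
  "fsub p q = (\<lambda>w. p w - q w)"

inductive_set clifford_ideal :: "(complex \<Rightarrow> 'v \<Rightarrow> 'v) \<Rightarrow> ('v::ab_group_add \<Rightarrow> complex)
     \<Rightarrow> ('v list \<Rightarrow> complex) set"
  for scale f where
  rel_add: "fsub (fsub (word [u + v]) (word [u])) (word [v]) \<in> clifford_ideal scale f"
| rel_smult: "fsub (word [scale c v]) (fsmult c (word [v])) \<in> clifford_ideal scale f"
| rel_sq: "fsub (word [v, v]) (fsmult (f v) (word [])) \<in> clifford_ideal scale f"
| zero: "(\<lambda>w. 0) \<in> clifford_ideal scale f"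
| add: "p \<in> clifford_ideal scale f \<Longrightarrow> q \<in> clifford_ideal scale f \<Longrightarrow> fadd p q \<in> clifford_ideal scale f"
| smult: "p \<in> clifford_ideal scale f \<Longrightarrow> fsmult c p \<in> clifford_ideal scale f"
| lmult: "p \<in> clifford_ideal scale f \<Longrightarrow> fmul (word w) p \<in> clifford_ideal scale f"
| rmult: "p \<in> clifford_ideal scale f \<Longrightarrow> fmul p (word w) \<in> clifford_ideal scale f"

definition cl_class :: "(complex \<Rightarrow> 'v \<Rightarrow> 'v) \<Rightarrow> ('v::ab_group_add \<Rightarrow> complex)
     \<Rightarrow> ('v list \<Rightarrow> complex) \<Rightarrow> ('v list \<Rightarrow> complex) set" where
  "cl_class scale f p = {q. fin_supp q \<and> fsub p q \<in> clifford_ideal scale f}"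

definition clifford :: "(complex \<Rightarrow> 'v \<Rightarrow> 'v) \<Rightarrow> ('v::ab_group_add \<Rightarrow> complex)
     \<Rightarrow> ('v list \<Rightarrow> complex) set set" where
  "clifford scale f = cl_class scale f ` {p. fin_supp p}"

definition cl_sub :: "(complex \<Rightarrow> 'v \<Rightarrow> 'v) \<Rightarrow> ('v::ab_group_add \<Rightarrow> complex) \<Rightarrow> 'v set
     \<Rightarrow> ('v list \<Rightarrow> complex) set set" where
  "cl_sub scale f W =
     cl_class scale f ` {p. fin_supp p \<and> (\<forall>w. p w \<noteq> 0 \<longrightarrow> set w \<subseteq> W)}"

definition cl_scalars :: "(complex \<Rightarrow> 'v \<Rightarrow> 'v) \<Rightarrow> ('v::ab_group_add \<Rightarrow> complex)
     \<Rightarrow> ('v list \<Rightarrow> complex) set set" where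
  "cl_scalars scale f = (\<lambda>c. cl_class scale f (fsmult c (word []))) ` UNIV"

end

theory Submission
  imports Defs
begin


definition sg :: "nat \<Rightarrow> nat set \<Rightarrow> complex" where
  "sg a T = (-1) ^ card {t\<in>T. t < a}"

lemma sg_sq: "sg a T * sg a T = 1"
  by (simp add: sg_def flip: power_add mult_2 power_mult)

lemma sg_insert_self: "sg a (insert a T) = sg a T"
  unfolding sg_def by (rule arg_cong[where f="\<lambda>x. (-1)^card x"]) auto

lemma sg_remove_self: "sg a (T - {a}) = sg a T"
  unfolding sg_def by (rule arg_cong[where f="\<lambda>x. (-1)^card x"]) auto

lemma sg_insert: assumes "a \<notin> T" "a \<noteq> b"
  shows "sg b (insert a T) = (if a < b then - sg b T else sg b T)"
proof (cases "a < b")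
  case True
  have "{t\<in>insert a T. t < b} = insert a {t\<in>T. t < b}" using True by auto
  moreover have "finite {t\<in>T. t < b}" by (rule finite_subset[of _ "{..<b}"]) auto
  ultimately show ?thesis using True assms by (simp add: sg_def)
next
  case False
  have "{t\<in>insert a T. t < b} = {t\<in>T. t < b}" using False by auto
  then show ?thesis using False by (simp add: sg_def)
qed

lemma sg_remove: assumes "a \<in> T" "a \<noteq> b"
  shows "sg b (T - {a}) = (if a < b then - sg b T else sg b T)"
proof -
  have "T = insert a (T - {a})" using assms by auto
  then have "sg b T = (if a < b then - sg b (T - {a}) else sg b (T - {a}))"
    using sg_insert[of a "T - {a}" b] assms by auto
  then show ?thesis by auto
qed

definition epsop :: "nat \<Rightarrow> (nat set \<Rightarrow> complex) \<Rightarrow> nat set \<Rightarrow> complex" where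
  "epsop j g = (\<lambda>T. if j \<in> T then sg j T * g (T - {j}) else 0)"

definition iotop :: "nat \<Rightarrow> (nat \<Rightarrow> nat \<Rightarrow> complex) \<Rightarrow> nat \<Rightarrow> (nat set \<Rightarrow> complex) \<Rightarrow> nat set \<Rightarrow> complex" where
  "iotop n \<beta> k g = (\<lambda>T. \<Sum>a\<in>{..<n} - T. sg a T * \<beta> k a * g (insert a T))"

definition Rop :: "nat \<Rightarrow> (nat \<Rightarrow> nat \<Rightarrow> complex) \<Rightarrow> nat \<Rightarrow> (nat set \<Rightarrow> complex) \<Rightarrow> nat set \<Rightarrow> complex" where
  "Rop n \<beta> j g = (\<lambda>T. epsop j g T + iotop n \<beta> j g T)"

lemma epsop_add: "epsop j (\<lambda>T. g T + h T) T = epsop j g T + epsop j h T"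
  by (simp add: epsop_def algebra_simps)
lemma iotop_add: "iotop n \<beta> j (\<lambda>T. g T + h T) T = iotop n \<beta> j g T + iotop n \<beta> j h T"
  by (simp add: iotop_def algebra_simps sum.distrib)
lemma epsop_scale: "epsop j (\<lambda>T. c * g T) T = c * epsop j g T"
  by (simp add: epsop_def algebra_simps)
lemma iotop_scale: "iotop n \<beta> j (\<lambda>T. c * g T) T = c * iotop n \<beta> j g T"
  by (simp add: iotop_def algebra_simps sum_distrib_left)

lemma anti_ee: "epsop j (epsop k g) T + epsop k (epsop j g) T = 0"
proof (cases "j = k")
  case True then show ?thesis by (simp add: epsop_def)
next
  case False
  show ?thesis
  proof (cases "j \<in> T \<and> k \<in> T")
    case True
    have e: "T - {j} - {k} = T - {k} - {j}" by auto
    have s: "sg k (T - {j}) * sg j T + sg j (T - {k}) * sg k T = 0"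
      using sg_remove[of j T k] sg_remove[of k T j] True False
      by (cases "j < k") auto
    have "epsop j (epsop k g) T + epsop k (epsop j g) T =
       (sg k (T - {j}) * sg j T + sg j (T - {k}) * sg k T) * g (T - {j} - {k})"
      using True False e by (simp add: epsop_def distrib_right)
    then show ?thesis using s by simp
  next
    case False
    then show ?thesis by (auto simp: epsop_def)
  qed
qed

lemma anti_ei: assumes "j < n"
  shows "epsop j (iotop n \<beta> k g) T + iotop n \<beta> k (epsop j g) T = \<beta> k j * g T"
proof (cases "j \<in> T")
  case True
  have fin: "finite ({..<n} - T)" by auto
  have jn: "j \<notin> {..<n} - T" using True by auto
  have s1: "{..<n} - (T - {j}) = insert j ({..<n} - T)" using True assms by auto
  have "epsop j (iotop n \<beta> k g) T = sg j T * (\<Sum>a\<in>insert j ({..<n} - T). sg a (T - {j}) * \<beta> k a * g (insert a (T - {j})))"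
    using True by (simp add: epsop_def iotop_def s1)
  also have "\<dots> = sg j T * (sg j (T - {j}) * \<beta> k j * g (insert j (T - {j}))) +
     (\<Sum>a\<in>{..<n} - T. sg j T * sg a (T - {j}) * \<beta> k a * g (insert a (T - {j})))"
    by (simp add: sum.insert[OF fin jn] distrib_left sum_distrib_left mult.assoc)
  also have "sg j T * (sg j (T - {j}) * \<beta> k j * g (insert j (T - {j}))) = \<beta> k j * g T"
  proof -
    have "insert j (T - {j}) = T" using True by auto
    then show ?thesis using sg_sq[of j T] by (simp add: sg_remove_self)
  qed
  also have "(\<Sum>a\<in>{..<n} - T. sg j T * sg a (T - {j}) * \<beta> k a * g (insert a (T - {j})))
     = - iotop n \<beta> k (epsop j g) T"
    unfolding iotop_def epsop_def sum_negf[symmetric]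
  proof (rule sum.cong[OF refl])
    fix a assume a: "a \<in> {..<n} - T"
    then have aj: "a \<noteq> j" "a \<notin> T" using True by auto
    have e: "insert a (T - {j}) = insert a T - {j}" using aj by auto
    have "sg j T * sg a (T - {j}) = - (sg a T * sg j (insert a T))"
      using sg_remove[of j T a] sg_insert[of a T j] aj True by (cases "a < j") auto
    then show "sg j T * sg a (T - {j}) * \<beta> k a * g (insert a (T - {j})) =
      - (sg a T * \<beta> k a * (if j \<in> insert a T then sg j (insert a T) * g (insert a T - {j}) else 0))"
      using True e by (simp add: algebra_simps)
  qed
  finally show ?thesis by simp
next
  case False
  have fin: "finite ({..<n} - T)" by auto
  have jn: "j \<in> {..<n} - T" using False assms by auto
  have "iotop n \<beta> k (epsop j g) T = (\<Sum>a\<in>{..<n} - T. sg a T * \<beta> k a * (if j \<in> insert a T then sg j (insert a T) * g (insert a T - {j}) else 0))"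
    by (simp add: iotop_def epsop_def)
  also have "\<dots> = sg j T * \<beta> k j * (sg j (insert j T) * g (insert j T - {j}))"
    using False by (subst sum.remove[OF fin jn]) (auto intro!: sum.neutral)
  also have "\<dots> = \<beta> k j * g T"
  proof -
    have "insert j T - {j} = T" using False by auto
    then show ?thesis using sg_sq[of j T] by (simp add: sg_insert_self algebra_simps)
  qed
  finally show ?thesis using False by (simp add: epsop_def)
qed

lemma sum_diff1_if: "finite S \<Longrightarrow> (\<Sum>b\<in>S - {a}. h b) = (\<Sum>b\<in>S. if b = a then 0 else h b)"
  by (rule sum.mono_neutral_cong_left) auto

lemma anti_ii: "iotop n \<beta> j (iotop n \<beta> k g) T + iotop n \<beta> k (iotop n \<beta> j g) T = 0"
proof -
  define S where "S = {..<n} - T"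
  have fin: "finite S" by (simp add: S_def)
  define F where "F a b = sg a T * sg b (insert a T) * g (insert b (insert a T))" for a b
  have F: "F b a = - F a b" if "a \<in> S" "b \<in> S" "a \<noteq> b" for a b
  proof -
    have aT: "a \<notin> T" "b \<notin> T" using that by (auto simp: S_def)
    have e: "insert b (insert a T) = insert a (insert b T)" by auto
    have "sg b T * sg a (insert b T) = - (sg a T * sg b (insert a T))"
    proof (cases "a < b")
      case True
      then show ?thesis using sg_insert[OF aT(1) that(3)] sg_insert[OF aT(2)] that(3) by simp
    next
      case False
      then show ?thesis using sg_insert[OF aT(1) that(3)] sg_insert[OF aT(2)] that(3) by simp
    qed
    then show ?thesis unfolding F_def e by simp
  qed
  have ins: "{..<n} - insert a T = S - {a}" for a by (auto simp: S_def)
  have X: "iotop n \<beta> j (iotop n \<beta> k g) T = (\<Sum>a\<in>S. \<Sum>b\<in>S. if b = a then 0 else \<beta> j a * \<beta> k b * F a b)" for j k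
  proof -
    have "iotop n \<beta> j (iotop n \<beta> k g) T = (\<Sum>a\<in>S. sg a T * \<beta> j a * (\<Sum>b\<in>S. if b = a then 0 else sg b (insert a T) * \<beta> k b * g (insert b (insert a T))))"
      unfolding iotop_def S_def[symmetric] ins sum_diff1_if[OF fin] by simp
    also have "\<dots> = (\<Sum>a\<in>S. \<Sum>b\<in>S. if b = a then 0 else \<beta> j a * \<beta> k b * F a b)"
      unfolding sum_distrib_left
    proof (intro sum.cong refl)
      fix a b
      show "sg a T * \<beta> j a * (if b = a then 0 else sg b (insert a T) * \<beta> k b * g (insert b (insert a T))) =
         (if b = a then 0 else \<beta> j a * \<beta> k b * F a b)"
        by (cases "b = a") (simp_all add: F_def mult_ac)
    qed
    finally show ?thesis .
  qed
  have "iotop n \<beta> k (iotop n \<beta> j g) T = (\<Sum>b\<in>S. \<Sum>a\<in>S. if a = b then 0 else \<beta> k b * \<beta> j a * F b a)"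
    by (rule X)
  also have "\<dots> = (\<Sum>a\<in>S. \<Sum>b\<in>S. if a = b then 0 else \<beta> k b * \<beta> j a * F b a)"
    by (rule sum.swap)
  also have "\<dots> = - (\<Sum>a\<in>S. \<Sum>b\<in>S. if b = a then 0 else \<beta> j a * \<beta> k b * F a b)"
    unfolding sum_negf[symmetric]
  proof (intro sum.cong refl)
    fix a b assume "a \<in> S" "b \<in> S"
    then show "(if a = b then 0 else \<beta> k b * \<beta> j a * F b a) = - (if b = a then 0 else \<beta> j a * \<beta> k b * F a b)"
      using F[of a b] by auto
  qed
  finally show ?thesis using X[of j k] by simp
qed

lemma lin4: "(A1::complex) + A2 = 0 \<Longrightarrow> B1 + B2 = 0 \<Longrightarrow>
  (A1 + C1) + (D2 + B1) + ((A2 + D1) + (C2 + B2)) = (C1 + C2) + (D1 + D2)"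
  by (simp add: add_eq_0_iff algebra_simps)

lemma R_anti: assumes "j < n" "k < n"
  shows "Rop n \<beta> j (Rop n \<beta> k g) T + Rop n \<beta> k (Rop n \<beta> j g) T = (\<beta> k j + \<beta> j k) * g T"
proof -
  have e1: "Rop n \<beta> j (Rop n \<beta> k g) T = (epsop j (epsop k g) T + epsop j (iotop n \<beta> k g) T) + (iotop n \<beta> j (epsop k g) T + iotop n \<beta> j (iotop n \<beta> k g) T)" for j k
    unfolding Rop_def epsop_add iotop_add by simp
  have a1: "epsop j (epsop k g) T + epsop k (epsop j g) T = 0" by (rule anti_ee)
  have a2: "iotop n \<beta> j (iotop n \<beta> k g) T + iotop n \<beta> k (iotop n \<beta> j g) T = 0" by (rule anti_ii)
  have a3: "epsop j (iotop n \<beta> k g) T + iotop n \<beta> k (epsop j g) T = \<beta> k j * g T" by (rule anti_ei[OF assms(1)])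
  have a4: "epsop k (iotop n \<beta> j g) T + iotop n \<beta> j (epsop k g) T = \<beta> j k * g T" by (rule anti_ei[OF assms(2)])
  show ?thesis unfolding e1[of j k] e1[of k j] distrib_right a3[symmetric] a4[symmetric]
    by (rule lin4[OF a1 a2])
qed



lemma Rop_add: "Rop n \<beta> j (\<lambda>T. g T + h T) T = Rop n \<beta> j g T + Rop n \<beta> j h T"
  unfolding Rop_def epsop_add iotop_add by simp

lemma Rop_scale: "Rop n \<beta> j (\<lambda>T. c * g T) T = c * Rop n \<beta> j g T"
  unfolding Rop_def epsop_scale iotop_scale by (simp add: algebra_simps)

lemma Rop_zero: "Rop n \<beta> j (\<lambda>T. 0) T = 0"
  using Rop_scale[of n \<beta> j 0 "\<lambda>T. 0" T] by simp

lemma Rop_sum: "Rop n \<beta> j (\<lambda>T. \<Sum>k\<in>K. h k T) T = (\<Sum>k\<in>K. Rop n \<beta> j (h k) T)"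
proof (induction K rule: infinite_finite_induct)
  case (infinite A) then show ?case by (simp add: Rop_zero)
next
  case empty then show ?case by (simp add: Rop_zero)
next
  case (insert x F)
  then show ?case by (simp add: Rop_add)
qed

lemma Rop_supp: assumes "\<And>T. g T \<noteq> 0 \<Longrightarrow> T \<subseteq> A" "Rop n \<beta> j g T \<noteq> 0"
  shows "T \<subseteq> insert j A"
proof (rule ccontr)
  assume nT: "\<not> T \<subseteq> insert j A"
  have "epsop j g T = 0"
  proof -
    have "g (T - {j}) = 0" using assms(1)[of "T - {j}"] nT by auto
    then show ?thesis by (simp add: epsop_def)
  qed
  moreover have "iotop n \<beta> j g T = 0"
    unfolding iotop_def
  proof (rule sum.neutral, rule ballI)
    fix a assume "a \<in> {..<n} - T"
    have "g (insert a T) = 0" using assms(1)[of "insert a T"] nT by auto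
    then show "sg a T * \<beta> j a * g (insert a T) = 0" by simp
  qed
  ultimately show False using assms(2) by (simp add: Rop_def)
qed

definition dl :: "nat set \<Rightarrow> nat set \<Rightarrow> complex" where
  "dl S = (\<lambda>T. if T = S then 1 else 0)"

lemma sg_low: "(\<And>t. t \<in> T \<Longrightarrow> j \<le> t) \<Longrightarrow> sg j T = 1"
proof -
  assume "\<And>t. t \<in> T \<Longrightarrow> j \<le> t"
  then have e: "{t\<in>T. t < j} = {}" by force
  show ?thesis unfolding sg_def e by simp
qed

lemma Rop_dl_low: assumes "j < n" "\<And>s. s \<in> S \<Longrightarrow> j < s" "\<And>k a. k < a \<Longrightarrow> \<beta> k a = 0"
  shows "Rop n \<beta> j (dl S) T = dl (insert j S) T"
proof -
  have jS: "j \<notin> S" using assms(2) by blast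
  have e: "epsop j (dl S) T = dl (insert j S) T"
  proof (cases "T = insert j S")
    case True
    have "sg j T = 1" using True assms(2) by (intro sg_low) force
    then show ?thesis using True jS by (simp add: epsop_def dl_def)
  next
    case False
    have "\<not> (j \<in> T \<and> T - {j} = S)" using False by auto
    then show ?thesis using False by (auto simp add: epsop_def dl_def)
  qed
  have i: "iotop n \<beta> j (dl S) T = 0"
    unfolding iotop_def
  proof (rule sum.neutral, rule ballI)
    fix a assume a: "a \<in> {..<n} - T"
    show "sg a T * \<beta> j a * dl S (insert a T) = 0"
    proof (cases "insert a T = S")
      case True
      then have "a \<in> S" by auto
      then have "\<beta> j a = 0" using assms(2,3) by blast
      then show ?thesis by simp
    qed (simp add: dl_def)
  qed
  show ?thesis using e i by (simp add: Rop_def)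
qed

lemma Rop_dl_min: assumes "s < n" "s \<in> S" "\<And>t. t \<in> S \<Longrightarrow> s \<le> t" "\<And>k a. k < a \<Longrightarrow> \<beta> k a = 0"
  shows "Rop n \<beta> s (dl S) T = \<beta> s s * dl (S - {s}) T"
proof -
  have e: "epsop s (dl S) T = 0"
    using assms(2) by (auto simp: epsop_def dl_def)
  have "iotop n \<beta> s (dl S) T = (\<Sum>a\<in>{..<n} - T. if a = s then \<beta> s s * dl (S - {s}) T else 0)"
    unfolding iotop_def
  proof (rule sum.cong[OF refl])
    fix a assume a: "a \<in> {..<n} - T"
    show "sg a T * \<beta> s a * dl S (insert a T) = (if a = s then \<beta> s s * dl (S - {s}) T else 0)"
    proof (cases "insert a T = S")
      case True
      then have aS: "a \<in> S" and TS: "T = S - {a}" using a by auto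
      show ?thesis
      proof (cases "a = s")
        case True
        have "sg s T = 1" using TS True assms(3) by (intro sg_low) auto
        then show ?thesis using True TS assms(2) by (simp add: dl_def insert_absorb)
      next
        case False
        then have "s < a" using assms(3)[OF aS] by simp
        then have "\<beta> s a = 0" using assms(4) by blast
        then show ?thesis using False by simp
      qed
    next
      case False
      have "a = s \<Longrightarrow> T \<noteq> S - {s}" using False a assms(2) by auto
      then show ?thesis using False by (auto simp: dl_def)
    qed
  qed
  also have "\<dots> = \<beta> s s * dl (S - {s}) T"
  proof (cases "s \<in> T")
    case True
    then have "T \<noteq> S - {s}" by auto
    then show ?thesis by (simp add: dl_def)
  next
    case False
    then show ?thesis using assms(1) by (simp add: sum.delta)
  qed
  finally show ?thesis using e by (simp add: Rop_def)
qed



lemma dsum_split: "(\<Sum>j<(N::nat). \<Sum>k<N. a j k) = (\<Sum>j<N. a j j) + (\<Sum>j<N. \<Sum>k<j. a j k + a k j :: complex)"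
proof (induction N)
  case 0 then show ?case by simp
next
  case (Suc N)
  then show ?case by (simp add: sum.distrib algebra_simps)
qed

lemma nth_image_lessThan: "nth es ` {..<length es} = set es"
  by (auto simp: in_set_conv_nth)

locale cl = vector_space scale for scale :: "complex \<Rightarrow> 'v::ab_group_add \<Rightarrow> 'v" +
  fixes f :: "'v \<Rightarrow> complex"
  assumes qf: "quadratic_form scale f"
begin

definition Bf :: "'v \<Rightarrow> 'v \<Rightarrow> complex" where
  "Bf u v = f (u + v) - f u - f v"

lemma f_scale: "f (scale a v) = a^2 * f v"
  using qf by (simp add: quadratic_form_def)

lemma Bf_add1: "Bf (u1 + u2) v = Bf u1 v + Bf u2 v"
  using qf unfolding quadratic_form_def Let_def Bf_def by blast
lemma Bf_scale1: "Bf (scale a u) v = a * Bf u v"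
  using qf unfolding quadratic_form_def Let_def Bf_def by blast
lemma Bf_sym: "Bf u v = Bf v u"
  by (simp add: Bf_def add.commute)
lemma Bf_scale2: "Bf u (scale a v) = a * Bf u v"
  using Bf_scale1 Bf_sym by metis
lemma f_add: "f (u + v) = f u + f v + Bf u v"
  by (simp add: Bf_def)
lemma f_zero: "f 0 = 0"
  using f_scale[of 0 0] by simp
lemma Bf_zero1: "Bf 0 v = 0"
  using Bf_scale1[of 0 0 v] by simp

lemma Bf_sum1: "Bf (\<Sum>j\<in>K. x j) v = (\<Sum>j\<in>K. Bf (x j) v)"
  by (induction K rule: infinite_finite_induct) (simp_all add: Bf_zero1 Bf_add1)

lemma quad_sum: "f (\<Sum>j<(N::nat). scale (c j) (e j)) =
   (\<Sum>j<N. (c j)^2 * f (e j)) + (\<Sum>j<N. \<Sum>k<j. c j * c k * Bf (e k) (e j))"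
proof (induction N)
  case 0 then show ?case by (simp add: f_zero)
next
  case (Suc N)
  have "f (\<Sum>j<Suc N. scale (c j) (e j)) = f (\<Sum>j<N. scale (c j) (e j)) + f (scale (c N) (e N))
     + Bf (\<Sum>j<N. scale (c j) (e j)) (scale (c N) (e N))"
    by (simp add: f_add)
  also have "Bf (\<Sum>j<N. scale (c j) (e j)) (scale (c N) (e N)) = (\<Sum>k<N. c N * c k * Bf (e k) (e N))"
    by (simp add: Bf_sum1 Bf_scale1 Bf_scale2 sum_distrib_left mult_ac)
  finally show ?case using Suc by (simp add: f_scale)
qed

definition bt :: "'v list \<Rightarrow> nat \<Rightarrow> nat \<Rightarrow> complex" where
  "bt es k a = (if a = k then f (es!k) else if a < k then Bf (es!a) (es!k) else 0)"

lemma bt_tri: "k < a \<Longrightarrow> bt es k a = 0"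
  by (simp add: bt_def)

definition crd :: "'v list \<Rightarrow> 'v \<Rightarrow> nat \<Rightarrow> complex" where
  "crd es v j = representation (set es) v (es!j)"

definition rho :: "'v list \<Rightarrow> 'v \<Rightarrow> (nat set \<Rightarrow> complex) \<Rightarrow> nat set \<Rightarrow> complex" where
  "rho es v g = (\<lambda>T. \<Sum>j<length es. crd es v j * Rop (length es) (bt es) j g T)"

lemma rho_add_g: "rho es v (\<lambda>T. g T + h T) T = rho es v g T + rho es v h T"
  by (simp add: rho_def Rop_add sum.distrib algebra_simps)
lemma rho_scale_g: "rho es v (\<lambda>T. c * g T) T = c * rho es v g T"
  by (simp add: rho_def Rop_scale sum_distrib_left algebra_simps)
lemma rho_sum_g: "rho es v (\<lambda>T. \<Sum>k\<in>K. h k T) T = (\<Sum>k\<in>K. rho es v (h k) T)"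
  by (simp add: rho_def Rop_sum sum_distrib_left sum.swap[of _ K])
lemma rho_zero_g: "rho es v (\<lambda>T. 0) T = 0"
  by (simp add: rho_def Rop_zero)

lemma vec_expand: assumes "independent (set es)" "distinct es" "v \<in> span (set es)"
  shows "v = (\<Sum>j<length es. scale (crd es v j) (es!j))"
proof -
  have "v = (\<Sum>b\<in>set es. scale (representation (set es) v b) b)"
    using sum_representation_eq[OF assms(1,3)] by simp
  also have "\<dots> = (\<Sum>j<length es. scale (crd es v j) (es!j))"
    unfolding nth_image_lessThan[symmetric, of es] crd_def
    by (subst sum.reindex) (auto intro: inj_on_nth assms(2))
  finally show ?thesis .
qed

lemma rho_sq: assumes "independent (set es)" "distinct es" "v \<in> span (set es)"
  shows "rho es v (rho es v g) T = f v * g T"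
proof -
  let ?n = "length es"
  let ?c = "crd es v"
  let ?A = "\<lambda>j k. ?c j * ?c k * Rop ?n (bt es) j (Rop ?n (bt es) k g) T"
  have "rho es v (rho es v g) T = (\<Sum>j<?n. \<Sum>k<?n. ?A j k)"
    unfolding rho_def by (simp add: Rop_sum Rop_scale sum_distrib_left mult_ac)
  also have "\<dots> = (\<Sum>j<?n. ?A j j) + (\<Sum>j<?n. \<Sum>k<j. ?A j k + ?A k j)"
    by (rule dsum_split)
  also have "(\<Sum>j<?n. ?A j j) = (\<Sum>j<?n. (?c j)^2 * f (es!j) * g T)"
  proof (rule sum.cong[OF refl])
    fix j assume j: "j \<in> {..<?n}"
    have "2 * Rop ?n (bt es) j (Rop ?n (bt es) j g) T = 2 * (f (es!j) * g T)"
      using R_anti[of j ?n j "bt es" g T] j by (simp add: bt_def)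
    then show "?A j j = (?c j)^2 * f (es!j) * g T" by (simp add: power2_eq_square)
  qed
  also have "(\<Sum>j<?n. \<Sum>k<j. ?A j k + ?A k j) = (\<Sum>j<?n. \<Sum>k<j. ?c j * ?c k * Bf (es!k) (es!j) * g T)"
  proof (intro sum.cong refl)
    fix j k assume j: "j \<in> {..<?n}" and k: "k \<in> {..<j}"
    have H: "Rop ?n (bt es) j (Rop ?n (bt es) k g) T + Rop ?n (bt es) k (Rop ?n (bt es) j g) T
       = Bf (es!k) (es!j) * g T"
      using R_anti[of j ?n k "bt es" g T] j k by (simp add: bt_def)
    have "?A j k + ?A k j = ?c j * ?c k * (Rop ?n (bt es) j (Rop ?n (bt es) k g) T + Rop ?n (bt es) k (Rop ?n (bt es) j g) T)"
      by (simp add: algebra_simps)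
    then show "?A j k + ?A k j = ?c j * ?c k * Bf (es!k) (es!j) * g T"
      unfolding H by (simp add: mult_ac)
  qed
  also have "(\<Sum>j<?n. (?c j)^2 * f (es!j) * g T) + (\<Sum>j<?n. \<Sum>k<j. ?c j * ?c k * Bf (es!k) (es!j) * g T)
     = f (\<Sum>j<?n. scale (?c j) (es!j)) * g T"
    unfolding quad_sum by (simp add: sum_distrib_right distrib_right)
  also have "(\<Sum>j<?n. scale (?c j) (es!j)) = v"
    using vec_expand[OF assms] by simp
  finally show ?thesis .
qed

lemma crd_add: "independent (set es) \<Longrightarrow> u \<in> span (set es) \<Longrightarrow> v \<in> span (set es) \<Longrightarrow>
  crd es (u + v) j = crd es u j + crd es v j"
  by (simp add: crd_def representation_add)
lemma crd_scale: "independent (set es) \<Longrightarrow> v \<in> span (set es) \<Longrightarrow>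
  crd es (scale c v) j = c * crd es v j"
  by (simp add: crd_def representation_scale)

lemma rho_add_v: "independent (set es) \<Longrightarrow> u \<in> span (set es) \<Longrightarrow> v \<in> span (set es) \<Longrightarrow>
  rho es (u + v) g T = rho es u g T + rho es v g T"
  by (simp add: rho_def crd_add sum.distrib algebra_simps)
lemma rho_scale_v: "independent (set es) \<Longrightarrow> v \<in> span (set es) \<Longrightarrow>
  rho es (scale c v) g T = c * rho es v g T"
  by (simp add: rho_def crd_scale sum_distrib_left algebra_simps)

end



lemma lm_formula: "fmul (word a) q = (\<lambda>u. if take (length a) u = a then q (drop (length a) u) else 0)"
proof (rule ext)
  fix u :: "'a list"
  have iff: "take k u = a \<longleftrightarrow> k = length a \<and> take (length a) u = a" if "k \<le> length u" for k
    using that by (metis length_take min.absorb2)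
  show "fmul (word a) q u = (if take (length a) u = a then q (drop (length a) u) else 0)"
  proof (cases "take (length a) u = a")
    case True
    have "min (length a) (length u) = length a" using arg_cong[OF True, of length] by simp
    then have le: "length a \<le> length u" by (metis min.absorb_iff1)
    have "fmul (word a) q u = (\<Sum>k\<le>length u. if k = length a then q (drop k u) else 0)"
      unfolding fmul_def word_def by (intro sum.cong refl) (use iff True in auto)
    also have "\<dots> = q (drop (length a) u)" using le by (simp add: sum.delta)
    finally show ?thesis using True by simp
  next
    case False
    have "fmul (word a) q u = 0"
      unfolding fmul_def word_def by (intro sum.neutral ballI) (use iff False in auto)
    then show ?thesis using False by auto
  qed
qed

lemma rm_formula: "fmul p (word b) = (\<lambda>u. if length b \<le> length u \<and> drop (length u - length b) u = b
    then p (take (length u - length b) u) else 0)"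
proof (rule ext)
  fix u :: "'a list"
  have iff: "drop k u = b \<longleftrightarrow> k = length u - length b \<and> length b \<le> length u \<and> drop (length u - length b) u = b"
    if "k \<le> length u" for k
    using that by (metis diff_diff_cancel diff_le_self length_drop)
  show "fmul p (word b) u = (if length b \<le> length u \<and> drop (length u - length b) u = b
    then p (take (length u - length b) u) else 0)"
  proof (cases "length b \<le> length u \<and> drop (length u - length b) u = b")
    case True
    have "fmul p (word b) u = (\<Sum>k\<le>length u. if k = length u - length b then p (take k u) else 0)"
      unfolding fmul_def word_def by (intro sum.cong refl) (use iff True in auto)
    also have "\<dots> = p (take (length u - length b) u)" by (simp add: sum.delta)
    finally show ?thesis using True by simp
  next
    case False
    have "fmul p (word b) u = 0"
      unfolding fmul_def word_def by (intro sum.neutral ballI) (use iff False in auto)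
    then show ?thesis using False by auto
  qed
qed

lemma lm_app: "fmul (word a) q (a @ r) = q r"
  by (simp add: lm_formula)
lemma rm_app: "fmul p (word b) (r @ b) = p r"
  by (simp add: rm_formula)
lemma lm_supp: "{u. fmul (word a) q u \<noteq> 0} \<subseteq> (\<lambda>r. a @ r) ` {r. q r \<noteq> 0}"
proof
  fix u assume "u \<in> {u. fmul (word a) q u \<noteq> 0}"
  then have "take (length a) u = a" "q (drop (length a) u) \<noteq> 0" by (auto simp: lm_formula split: if_splits)
  then show "u \<in> (\<lambda>r. a @ r) ` {r. q r \<noteq> 0}"
    by (intro image_eqI[of _ _ "drop (length a) u"]) (metis append_take_drop_id, auto)
qed
lemma rm_supp: "{u. fmul p (word b) u \<noteq> 0} \<subseteq> (\<lambda>r. r @ b) ` {r. p r \<noteq> 0}"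
proof
  fix u assume "u \<in> {u. fmul p (word b) u \<noteq> 0}"
  then have "drop (length u - length b) u = b" "p (take (length u - length b) u) \<noteq> 0"
    by (auto simp: rm_formula split: if_splits)
  then show "u \<in> (\<lambda>r. r @ b) ` {r. p r \<noteq> 0}"
    by (intro image_eqI[of _ _ "take (length u - length b) u"]) (metis append_take_drop_id, auto)
qed

lemma fin_supp_word: "fin_supp (word a)"
  unfolding fin_supp_def word_def by simp

lemma fin_supp_lm: "fin_supp q \<Longrightarrow> fin_supp (fmul (word a) q)"
  unfolding fin_supp_def using lm_supp finite_subset by blast
lemma fin_supp_rm: "fin_supp p \<Longrightarrow> fin_supp (fmul p (word b))"
  unfolding fin_supp_def using rm_supp finite_subset by blast

context cl begin

abbreviation I where "I \<equiv> clifford_ideal scale f"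

lemma I_fin: "x \<in> I \<Longrightarrow> fin_supp x"
proof (induction rule: clifford_ideal.induct)
  case (rel_add u v)
  have "{w. fsub (fsub (word [u + v]) (word [u])) (word [v]) w \<noteq> 0} \<subseteq> {[u+v],[u],[v]}"
    by (auto simp: fsub_def word_def split: if_splits)
  then show ?case unfolding fin_supp_def using finite_subset by blast
next
  case (rel_smult c v)
  have "{w. fsub (word [scale c v]) (fsmult c (word [v])) w \<noteq> 0} \<subseteq> {[scale c v],[v]}"
    by (auto simp: fsub_def fsmult_def word_def split: if_splits)
  then show ?case unfolding fin_supp_def using finite_subset by blast
next
  case (rel_sq v)
  have "{w. fsub (word [v, v]) (fsmult (f v) (word [])) w \<noteq> 0} \<subseteq> {[v,v],[]}"
    by (auto simp: fsub_def fsmult_def word_def split: if_splits)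
  then show ?case unfolding fin_supp_def using finite_subset by blast
next
  case zero then show ?case by (simp add: fin_supp_def)
next
  case (add p q)
  have "{w. fadd p q w \<noteq> 0} \<subseteq> {w. p w \<noteq> 0} \<union> {w. q w \<noteq> 0}" by (auto simp: fadd_def)
  then show ?case using add unfolding fin_supp_def using finite_subset by blast
next
  case (smult p c)
  have "{w. fsmult c p w \<noteq> 0} \<subseteq> {w. p w \<noteq> 0}" by (auto simp: fsmult_def)
  then show ?case using smult unfolding fin_supp_def using finite_subset by blast
next
  case (lmult p w) then show ?case using fin_supp_lm by blast
next
  case (rmult p w) then show ?case using fin_supp_rm by blast
qed

lemma I_add: "p \<in> I \<Longrightarrow> q \<in> I \<Longrightarrow> (\<lambda>w. p w + q w) \<in> I"
  using clifford_ideal.add[of p scale f q] by (simp add: fadd_def)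
lemma I_scale: "p \<in> I \<Longrightarrow> (\<lambda>w. c * p w) \<in> I"
  using clifford_ideal.smult[of p scale f c] by (simp add: fsmult_def)
lemma I_zero: "(\<lambda>w. 0) \<in> I"
  by (rule clifford_ideal.zero)
lemma I_diff: "p \<in> I \<Longrightarrow> q \<in> I \<Longrightarrow> (\<lambda>w. p w - q w) \<in> I"
  using I_add[of p "\<lambda>w. (-1) * q w"] I_scale[of q "-1"] by simp
lemma I_sum: "(\<And>k. k \<in> K \<Longrightarrow> F k \<in> I) \<Longrightarrow> (\<lambda>w. \<Sum>k\<in>K. F k w) \<in> I"
proof (induction K rule: infinite_finite_induct)
  case (insert x K') then show ?case using I_add[of "F x"] by simp
qed (simp_all add: I_zero)
lemma I_lm: "p \<in> I \<Longrightarrow> fmul (word a) p \<in> I"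
  by (rule clifford_ideal.lmult)
lemma I_rm: "p \<in> I \<Longrightarrow> fmul p (word a) \<in> I"
  by (rule clifford_ideal.rmult)

definition rhow :: "'v list \<Rightarrow> 'v list \<Rightarrow> (nat set \<Rightarrow> complex) \<Rightarrow> nat set \<Rightarrow> complex" where
  "rhow es ws g = foldr (rho es) ws g"

lemma rhow_Nil[simp]: "rhow es [] g = g" by (simp add: rhow_def)
lemma rhow_Cons[simp]: "rhow es (v # ws) g = rho es v (rhow es ws g)" by (simp add: rhow_def)
lemma rhow_append: "rhow es (a @ b) g = rhow es a (rhow es b g)" by (simp add: rhow_def)

lemma rhow_add: "rhow es ws (\<lambda>T. g T + h T) = (\<lambda>T. rhow es ws g T + rhow es ws h T)"
  by (induction ws) (simp_all add: rho_add_g)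
lemma rhow_scale: "rhow es ws (\<lambda>T. c * g T) = (\<lambda>T. c * rhow es ws g T)"
  by (induction ws) (simp_all add: rho_scale_g)
lemma rhow_zero: "rhow es ws (\<lambda>T. 0) = (\<lambda>T. 0)"
  by (induction ws) (simp_all add: rho_zero_g)
lemma rhow_sum: "rhow es ws (\<lambda>T. \<Sum>k\<in>K. h k T) = (\<lambda>T. \<Sum>k\<in>K. rhow es ws (h k) T)"
  by (induction ws) (simp_all add: rho_sum_g)

definition Phi :: "'v list \<Rightarrow> ('v list \<Rightarrow> complex) \<Rightarrow> (nat set \<Rightarrow> complex) \<Rightarrow> nat set \<Rightarrow> complex" where
  "Phi es p g = (\<lambda>T. \<Sum>w\<in>{w. p w \<noteq> 0}. p w * rhow es w g T)"

lemma Phi_superset: "finite A \<Longrightarrow> {w. p w \<noteq> 0} \<subseteq> A \<Longrightarrow> Phi es p g T = (\<Sum>w\<in>A. p w * rhow es w g T)"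
  unfolding Phi_def by (rule sum.mono_neutral_left) auto

lemma Phi_add: assumes "fin_supp p" "fin_supp q"
  shows "Phi es (\<lambda>w. p w + q w) g T = Phi es p g T + Phi es q g T"
proof -
  let ?A = "{w. p w \<noteq> 0} \<union> {w. q w \<noteq> 0}"
  have fA: "finite ?A" using assms by (simp add: fin_supp_def)
  have "Phi es (\<lambda>w. p w + q w) g T = (\<Sum>w\<in>?A. (p w + q w) * rhow es w g T)"
    by (rule Phi_superset[OF fA]) auto
  also have "\<dots> = (\<Sum>w\<in>?A. p w * rhow es w g T) + (\<Sum>w\<in>?A. q w * rhow es w g T)"
    by (simp add: distrib_right sum.distrib)
  also have "\<dots> = Phi es p g T + Phi es q g T"
    using Phi_superset[OF fA, of p] Phi_superset[OF fA, of q] by auto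
  finally show ?thesis .
qed

lemma Phi_scale: assumes "fin_supp p"
  shows "Phi es (\<lambda>w. c * p w) g T = c * Phi es p g T"
proof -
  have fA: "finite {w. p w \<noteq> 0}" using assms by (simp add: fin_supp_def)
  have "Phi es (\<lambda>w. c * p w) g T = (\<Sum>w\<in>{w. p w \<noteq> 0}. (c * p w) * rhow es w g T)"
    by (rule Phi_superset[OF fA]) auto
  then show ?thesis by (simp add: Phi_def sum_distrib_left mult_ac)
qed

lemma Phi_diff: assumes "fin_supp p" "fin_supp q"
  shows "Phi es (\<lambda>w. p w - q w) g T = Phi es p g T - Phi es q g T"
proof -
  have "fin_supp (\<lambda>w. (-1) * q w)" using assms(2) by (simp add: fin_supp_def)
  then show ?thesis using Phi_add[OF assms(1), where q="\<lambda>w. (-1) * q w"] Phi_scale[OF assms(2), where c="-1"]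
    by simp
qed

lemma Phi_word: "Phi es (word a) g T = rhow es a g T"
proof -
  have "Phi es (word a) g T = (\<Sum>w\<in>{a}. word a w * rhow es w g T)"
    by (rule Phi_superset) (auto simp: word_def split: if_splits)
  then show ?thesis by (simp add: word_def)
qed

lemma Phi_zero: "Phi es (\<lambda>w. 0) g T = 0"
  by (simp add: Phi_def)

lemma Phi_lm: assumes "fin_supp p"
  shows "Phi es (fmul (word a) p) g T = rhow es a (Phi es p g) T"
proof -
  let ?S = "{r. p r \<noteq> 0}"
  have fS: "finite ?S" using assms by (simp add: fin_supp_def)
  have "Phi es (fmul (word a) p) g T = (\<Sum>u\<in>(\<lambda>r. a @ r) ` ?S. fmul (word a) p u * rhow es u g T)"
    by (rule Phi_superset[OF _ lm_supp]) (use fS in auto)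
  also have "\<dots> = (\<Sum>r\<in>?S. p r * rhow es a (rhow es r g) T)"
    by (subst sum.reindex) (auto simp: inj_on_def lm_app rhow_append)
  also have "\<dots> = rhow es a (Phi es p g) T"
    unfolding Phi_def rhow_sum rhow_scale by simp
  finally show ?thesis .
qed

lemma Phi_rm: assumes "fin_supp p"
  shows "Phi es (fmul p (word b)) g T = Phi es p (rhow es b g) T"
proof -
  let ?S = "{r. p r \<noteq> 0}"
  have fS: "finite ?S" using assms by (simp add: fin_supp_def)
  have "Phi es (fmul p (word b)) g T = (\<Sum>u\<in>(\<lambda>r. r @ b) ` ?S. fmul p (word b) u * rhow es u g T)"
    by (rule Phi_superset[OF _ rm_supp]) (use fS in auto)
  also have "\<dots> = (\<Sum>r\<in>?S. p r * rhow es r (rhow es b g) T)"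
    by (subst sum.reindex) (auto simp: inj_on_def rm_app rhow_append)
  also have "\<dots> = Phi es p (rhow es b g) T"
    unfolding Phi_def by simp
  finally show ?thesis .
qed

lemma I_kill: "x \<in> I \<Longrightarrow> \<exists>X. finite X \<and> (\<forall>es. independent (set es) \<and> distinct es \<and> X \<subseteq> span (set es)
   \<longrightarrow> (\<forall>g T. Phi es x g T = 0))"
proof (induction rule: clifford_ideal.induct)
  case (rel_add u v)
  show ?case
  proof (intro exI[of _ "{u, v}"] conjI allI impI)
    fix es g T assume es: "independent (set es) \<and> distinct es \<and> {u, v} \<subseteq> span (set es)"
    then have r: "rho es (u + v) g T = rho es u g T + rho es v g T" by (intro rho_add_v) auto
    have fs: "fin_supp (\<lambda>w. word [u + v] w - word [u] w)"
      using fin_supp_word[of "[u+v]"] fin_supp_word[of "[u]"] unfolding fin_supp_def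
      by (rule finite_subset[rotated, OF finite_UnI]) auto
    show "Phi es (fsub (fsub (word [u + v]) (word [u])) (word [v])) g T = 0"
      unfolding fsub_def
      using Phi_diff[OF fs fin_supp_word] Phi_diff[OF fin_supp_word fin_supp_word]
      by (simp add: r Phi_word)
  qed simp
next
  case (rel_smult c v)
  show ?case
  proof (intro exI[of _ "{v}"] conjI allI impI)
    fix es g T assume es: "independent (set es) \<and> distinct es \<and> {v} \<subseteq> span (set es)"
    then have r: "rho es (scale c v) g T = c * rho es v g T" by (intro rho_scale_v) auto
    have fs: "fin_supp (\<lambda>w. c * word [v] w)" using fin_supp_word[of "[v]"] unfolding fin_supp_def
      by (rule finite_subset[rotated]) auto
    show "Phi es (fsub (word [scale c v]) (fsmult c (word [v]))) g T = 0"
      unfolding fsub_def fsmult_def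
      using Phi_diff[OF fin_supp_word fs] Phi_scale[OF fin_supp_word, where c=c]
      by (simp add: Phi_word r)
  qed simp
next
  case (rel_sq v)
  show ?case
  proof (intro exI[of _ "{v}"] conjI allI impI)
    fix es g T assume es: "independent (set es) \<and> distinct es \<and> {v} \<subseteq> span (set es)"
    then have r: "rho es v (rho es v g) T = f v * g T" by (intro rho_sq) auto
    have fs: "fin_supp (\<lambda>w. f v * word [] w)" using fin_supp_word[of "[]"] unfolding fin_supp_def
      by (rule finite_subset[rotated]) auto
    show "Phi es (fsub (word [v, v]) (fsmult (f v) (word []))) g T = 0"
      unfolding fsub_def fsmult_def
      using Phi_diff[OF fin_supp_word fs] Phi_scale[OF fin_supp_word, where c="f v"]
      by (simp add: Phi_word r)
  qed simp
next
  case zero then show ?case by (auto simp: Phi_zero)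
next
  case (add p q)
  then obtain X1 X2 where X: "finite X1" "finite X2"
    "\<forall>es. independent (set es) \<and> distinct es \<and> X1 \<subseteq> span (set es) \<longrightarrow> (\<forall>g T. Phi es p g T = 0)"
    "\<forall>es. independent (set es) \<and> distinct es \<and> X2 \<subseteq> span (set es) \<longrightarrow> (\<forall>g T. Phi es q g T = 0)"
    by blast
  show ?case
    by (rule exI[of _ "X1 \<union> X2"]) (use X I_fin[OF add.hyps(1)] I_fin[OF add.hyps(2)] in \<open>auto simp: fadd_def Phi_add\<close>)
next
  case (smult p c)
  then obtain X where X: "finite X"
    "\<forall>es. independent (set es) \<and> distinct es \<and> X \<subseteq> span (set es) \<longrightarrow> (\<forall>g T. Phi es p g T = 0)"
    by blast
  show ?case
    by (rule exI[of _ X]) (use X I_fin[OF smult.hyps(1)] in \<open>auto simp: fsmult_def Phi_scale\<close>)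
next
  case (lmult p a)
  then obtain X where X: "finite X"
    "\<forall>es. independent (set es) \<and> distinct es \<and> X \<subseteq> span (set es) \<longrightarrow> (\<forall>g T. Phi es p g T = 0)"
    by blast
  show ?case
  proof (rule exI[of _ X], intro conjI allI impI)
    fix es g T assume es: "independent (set es) \<and> distinct es \<and> X \<subseteq> span (set es)"
    then have "Phi es p g = (\<lambda>T. 0)" using X by auto
    then show "Phi es (fmul (word a) p) g T = 0"
      using Phi_lm[OF I_fin[OF lmult.hyps]] by (simp add: rhow_zero)
  qed (use X in simp)
next
  case (rmult p b)
  then obtain X where X: "finite X"
    "\<forall>es. independent (set es) \<and> distinct es \<and> X \<subseteq> span (set es) \<longrightarrow> (\<forall>g T. Phi es p g T = 0)"
    by blast
  show ?case
  proof (rule exI[of _ X], intro conjI allI impI)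
    fix es g T assume es: "independent (set es) \<and> distinct es \<and> X \<subseteq> span (set es)"
    then show "Phi es (fmul p (word b)) g T = 0"
      using Phi_rm[OF I_fin[OF rmult.hyps]] X by simp
  qed (use X in simp)
qed

end



lemma sls_insert_min: assumes "finite T" "\<And>t. t \<in> T \<Longrightarrow> s < t"
  shows "sorted_list_of_set (insert s T) = s # sorted_list_of_set T"
proof -
  have m: "Min (insert s T) = s" by (rule Min_eqI) (use assms in \<open>auto intro: less_imp_le\<close>)
  have "insert s T - {s} = T" using assms(2) by auto
  then show ?thesis using sorted_list_of_set_nonempty[of "insert s T"] assms(1) m by simp
qed

lemma lm_word: "fmul (word a) (word b) = word (a @ b)"
proof (rule ext)
  fix u :: "'a list"
  have "(take (length a) u = a \<and> drop (length a) u = b) \<longleftrightarrow> u = a @ b"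
    by (metis append_eq_conv_conj)
  moreover have "fmul (word a) (word b) u = (if take (length a) u = a then word b (drop (length a) u) else 0)"
    by (simp only: lm_formula)
  ultimately show "fmul (word a) (word b) u = word (a @ b) u"
    by (auto simp: word_def)
qed

lemma sum_if_P: "(\<Sum>k\<in>K. if P then F k else 0) = (if P then (\<Sum>k\<in>K. F k) else 0)"
  by (cases P) simp_all

lemma lm_sum: "fmul (word a) (\<lambda>w. \<Sum>k\<in>K. F k w) = (\<lambda>u. \<Sum>k\<in>K. fmul (word a) (F k) u)"
  by (rule ext) (simp add: lm_formula sum_if_P)
lemma lm_scale: "fmul (word a) (\<lambda>w. c * F w) = (\<lambda>u. c * fmul (word a) F u)"
  by (rule ext) (simp add: lm_formula sum_if_P)
lemma lm_diff: "fmul (word a) (\<lambda>w. F w - G w) = (\<lambda>u. fmul (word a) F u - fmul (word a) G u)"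
  by (rule ext) (simp add: lm_formula sum_if_P)
lemma lm_add: "fmul (word a) (\<lambda>w. F w + G w) = (\<lambda>u. fmul (word a) F u + fmul (word a) G u)"
  by (rule ext) (simp add: lm_formula)
lemma rm_add: "fmul (\<lambda>w. F w + G w) (word a) = (\<lambda>u. fmul F (word a) u + fmul G (word a) u)"
  by (rule ext) (simp add: rm_formula)
lemma rm_sum: "fmul (\<lambda>w. \<Sum>k\<in>K. F k w) (word a) = (\<lambda>u. \<Sum>k\<in>K. fmul (F k) (word a) u)"
  by (rule ext) (simp add: rm_formula sum_if_P)
lemma rm_scale: "fmul (\<lambda>w. c * F w) (word a) = (\<lambda>u. c * fmul F (word a) u)"
  by (rule ext) (simp add: rm_formula sum_if_P)
lemma rm_diff: "fmul (\<lambda>w. F w - G w) (word a) = (\<lambda>u. fmul F (word a) u - fmul G (word a) u)"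
  by (rule ext) (simp add: rm_formula sum_if_P)

context cl begin

definition ceq :: "('v list \<Rightarrow> complex) \<Rightarrow> ('v list \<Rightarrow> complex) \<Rightarrow> bool" where
  "ceq p q \<longleftrightarrow> (\<lambda>w. p w - q w) \<in> I"

lemma ceq_refl: "ceq p p" by (simp add: ceq_def I_zero)
lemma ceq_eq: "p = q \<Longrightarrow> ceq p q" by (simp add: ceq_refl)
lemma ceq_sym: "ceq p q \<Longrightarrow> ceq q p"
  unfolding ceq_def using I_scale[where p="\<lambda>w. p w - q w" and c="-1"] by (simp add: algebra_simps)
lemma ceq_trans: "ceq p q \<Longrightarrow> ceq q r \<Longrightarrow> ceq p r"
  unfolding ceq_def using I_add[where p="\<lambda>w. p w - q w" and q="\<lambda>w. q w - r w"] by simp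
lemma ceq_add: "ceq p p' \<Longrightarrow> ceq q q' \<Longrightarrow> ceq (\<lambda>w. p w + q w) (\<lambda>w. p' w + q' w)"
  unfolding ceq_def using I_add[where p="\<lambda>w. p w - p' w" and q="\<lambda>w. q w - q' w"] by (simp add: algebra_simps)
lemma ceq_diff: "ceq p p' \<Longrightarrow> ceq q q' \<Longrightarrow> ceq (\<lambda>w. p w - q w) (\<lambda>w. p' w - q' w)"
  unfolding ceq_def using I_diff[where p="\<lambda>w. p w - p' w" and q="\<lambda>w. q w - q' w"] by (simp add: algebra_simps)
lemma ceq_scale: "ceq p q \<Longrightarrow> ceq (\<lambda>w. c * p w) (\<lambda>w. c * q w)"
  unfolding ceq_def using I_scale[where p="\<lambda>w. p w - q w" and c=c] by (simp add: algebra_simps)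
lemma ceq_sum: "(\<And>k. k \<in> K \<Longrightarrow> ceq (F k) (G k)) \<Longrightarrow> ceq (\<lambda>w. \<Sum>k\<in>K. F k w) (\<lambda>w. \<Sum>k\<in>K. G k w)"
  unfolding ceq_def using I_sum[where K=K and F="\<lambda>k w. F k w - G k w"] by (simp add: sum_subtractf)
lemma ceq_lm: "ceq p q \<Longrightarrow> ceq (fmul (word a) p) (fmul (word a) q)"
  unfolding ceq_def using I_lm[where p="\<lambda>w. p w - q w" and a=a] by (simp add: lm_diff)
lemma ceq_rm: "ceq p q \<Longrightarrow> ceq (fmul p (word a)) (fmul q (word a))"
  unfolding ceq_def using I_rm[where p="\<lambda>w. p w - q w" and a=a] by (simp add: rm_diff)

lemma R_add: "ceq (word [u + v]) (\<lambda>w. word [u] w + word [v] w)"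
  using clifford_ideal.rel_add[where u=u and v=v and scale=scale and f=f] unfolding ceq_def fsub_def by (simp add: algebra_simps)
lemma R_smult: "ceq (word [scale c v]) (\<lambda>w. c * word [v] w)"
  using clifford_ideal.rel_smult[where c=c and v=v and scale=scale and f=f] unfolding ceq_def fsub_def fsmult_def by simp
lemma R_sq0: "ceq (word [v, v]) (\<lambda>w. f v * word [] w)"
  using clifford_ideal.rel_sq[where v=v and scale=scale and f=f] unfolding ceq_def fsub_def fsmult_def by simp

lemma R_lin: "ceq (word [\<Sum>j\<in>K. scale (c j) (x j)]) (\<lambda>w. \<Sum>j\<in>K. c j * word [x j] w)"
proof (induction K rule: infinite_finite_induct)
  case (infinite A)
  have "ceq (word [0 + 0]) (\<lambda>w. word [0] w + word [0] w)" by (rule R_add)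
  then have "(\<lambda>w. word [0] w - (word [0] w + word [0] w)) \<in> I" by (simp add: ceq_def)
  then have "(\<lambda>w. (-1) * (word [0] w - (word [0] w + word [0] w))) \<in> I" by (rule I_scale)
  then show ?case using infinite by (simp add: ceq_def)
next
  case empty
  have "ceq (word [0 + 0]) (\<lambda>w. word [0] w + word [0] w)" by (rule R_add)
  then have "(\<lambda>w. word [0] w - (word [0] w + word [0] w)) \<in> I" by (simp add: ceq_def)
  then have "(\<lambda>w. (-1) * (word [0] w - (word [0] w + word [0] w))) \<in> I" by (rule I_scale)
  then show ?case by (simp add: ceq_def)
next
  case (insert a K')
  have "ceq (word [scale (c a) (x a) + (\<Sum>j\<in>K'. scale (c j) (x j))])
     (\<lambda>w. word [scale (c a) (x a)] w + word [\<Sum>j\<in>K'. scale (c j) (x j)] w)" by (rule R_add)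
  moreover have "ceq (\<lambda>w. word [scale (c a) (x a)] w + word [\<Sum>j\<in>K'. scale (c j) (x j)] w)
     (\<lambda>w. c a * word [x a] w + (\<Sum>j\<in>K'. c j * word [x j] w))"
    by (rule ceq_add[OF R_smult insert.IH])
  ultimately show ?case using insert by (simp add: ceq_trans)
qed

lemma R_rm_word: "fmul (word a) (word b) = word (a @ b)" by (rule lm_word)

lemma R_lin_l: "ceq (word ((\<Sum>j\<in>K. scale (c j) (x j)) # l)) (\<lambda>w. \<Sum>j\<in>K. c j * word (x j # l) w)"
  using ceq_rm[OF R_lin[where K=K and c=c and x=x], where a=l] by (simp add: rm_sum rm_scale lm_word)

lemma R_sq: "ceq (word (x # x # l)) (\<lambda>w. f x * word l w)"
  using ceq_rm[OF R_sq0, of x l] by (simp add: rm_scale lm_word)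

lemma R_anticomm0: "ceq (\<lambda>w. word [x, y] w + word [y, x] w) (\<lambda>w. Bf x y * word [] w)"
proof -
  have a1: "ceq (word [x + y, x + y]) (\<lambda>w. word [x, x + y] w + word [y, x + y] w)"
    using ceq_rm[OF R_add, of x y "[x + y]"] by (simp add: rm_add lm_word)
  have a2: "ceq (word [x, x + y]) (\<lambda>w. word [x, x] w + word [x, y] w)"
    using ceq_lm[OF R_add, of "[x]" x y] by (simp add: lm_add lm_word)
  have a3: "ceq (word [y, x + y]) (\<lambda>w. word [y, x] w + word [y, y] w)"
    using ceq_lm[OF R_add, of "[y]" x y] by (simp add: lm_add lm_word)
  have e1: "ceq (word [x + y, x + y]) (\<lambda>w. (word [x, x] w + word [x, y] w) + (word [y, x] w + word [y, y] w))"
    using ceq_trans[OF a1 ceq_add[OF a2 a3]] .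
  have e2: "ceq (\<lambda>w. (word [x, x] w + word [x, y] w) + (word [y, x] w + word [y, y] w))
     (\<lambda>w. f (x + y) * word [] w)"
    using ceq_trans[OF ceq_sym[OF e1] R_sq0] .
  have e3: "ceq (\<lambda>w. ((word [x, x] w + word [x, y] w) + (word [y, x] w + word [y, y] w)) - (word [x, x] w + word [y, y] w))
     (\<lambda>w. f (x + y) * word [] w - (f x * word [] w + f y * word [] w))"
    by (rule ceq_diff[OF e2 ceq_add[OF R_sq0 R_sq0]])
  show ?thesis using e3 by (simp add: Bf_def algebra_simps)
qed

lemma R_anticomm: "ceq (word (x # y # l)) (\<lambda>w. Bf x y * word l w - word (y # x # l) w)"
proof -
  have "ceq (\<lambda>w. word (x # y # l) w + word (y # x # l) w) (\<lambda>w. Bf x y * word l w)"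
    using ceq_rm[OF R_anticomm0, of x y l] by (simp add: rm_add rm_scale lm_word)
  from ceq_diff[OF this ceq_refl[of "word (y # x # l)"]] show ?thesis by simp
qed

end



locale clb = cl scale f for scale :: "complex \<Rightarrow> 'v::ab_group_add \<Rightarrow> 'v" and f +
  fixes es :: "'v list" and m :: nat
  assumes ind: "independent (set es)" and dist: "distinct es" and mle: "m \<le> length es"
begin

abbreviation RR where "RR j \<equiv> Rop (length es) (bt es) j"

definition msl :: "nat set \<Rightarrow> 'v list" where
  "msl S = map ((!) es) (sorted_list_of_set S)"

definition mono :: "nat set \<Rightarrow> 'v list \<Rightarrow> complex" where
  "mono S = word (msl S)"

definition sig :: "(nat set \<Rightarrow> complex) \<Rightarrow> 'v list \<Rightarrow> complex" where
  "sig g = (\<lambda>w. \<Sum>S\<in>Pow {..<m}. g S * mono S w)"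

lemma sig_dl: assumes "S \<subseteq> {..<m}" shows "sig (dl S) = mono S"
proof (rule ext)
  fix w
  have "sig (dl S) w = (\<Sum>S'\<in>Pow {..<m}. if S' = S then mono S' w else 0)"
    unfolding sig_def by (intro sum.cong refl) (simp add: dl_def)
  also have "\<dots> = mono S w" using assms by (simp add: sum.delta)
  finally show "sig (dl S) w = mono S w" .
qed

lemma sig_sum: "sig (\<lambda>T. \<Sum>k\<in>K. F k T) = (\<lambda>w. \<Sum>k\<in>K. sig (F k) w)"
  by (rule ext) (simp add: sig_def sum_distrib_right sum.swap[of _ K])
lemma sig_scale: "sig (\<lambda>T. c * F T) = (\<lambda>w. c * sig F w)"
  by (rule ext) (simp add: sig_def sum_distrib_left mult_ac)
lemma sig_diff: "sig (\<lambda>T. F T - G T) = (\<lambda>w. sig F w - sig G w)"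
  by (rule ext) (simp add: sig_def left_diff_distrib sum_subtractf)

lemma decomp: assumes "\<And>T. g T \<noteq> 0 \<Longrightarrow> T \<subseteq> {..<m}"
  shows "g = (\<lambda>X. \<Sum>T\<in>Pow {..<m}. g T * dl T X)"
proof (rule ext)
  fix X
  have "(\<Sum>T\<in>Pow {..<m}. g T * dl T X) = (\<Sum>T\<in>Pow {..<m}. if T = X then g T else 0)"
    by (intro sum.cong refl) (auto simp: dl_def)
  also have "\<dots> = g X" using assms[of X] by (auto simp: sum.delta')
  finally show "g X = (\<Sum>T\<in>Pow {..<m}. g T * dl T X)" by simp
qed

lemma RR_decomp: assumes "\<And>T. g T \<noteq> 0 \<Longrightarrow> T \<subseteq> {..<m}"
  shows "RR j g T = (\<Sum>S\<in>Pow {..<m}. g S * RR j (dl S) T)"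
proof -
  have "RR j g T = RR j (\<lambda>X. \<Sum>T\<in>Pow {..<m}. g T * dl T X) T"
    using arg_cong[OF decomp[OF assms], where f="\<lambda>h. RR j h T"] .
  then show ?thesis by (simp add: Rop_sum Rop_scale)
qed

lemma msl_insert: "finite T \<Longrightarrow> (\<And>t. t \<in> T \<Longrightarrow> s < t) \<Longrightarrow> msl (insert s T) = es!s # msl T"
  unfolding msl_def by (subst sls_insert_min) auto

lemma L: assumes s: "s < m" and h: "\<And>T. h T \<noteq> 0 \<Longrightarrow> T \<subseteq> {..<m} \<and> (\<forall>t\<in>T. s < t)"
  shows "sig (RR s h) = fmul (word [es!s]) (sig h)"
proof (rule ext)
  fix w
  have sn: "s < length es" using s mle by simp
  have hm: "\<And>T. h T \<noteq> 0 \<Longrightarrow> T \<subseteq> {..<m}" using h by blast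
  have t1: "h T * RR s (dl T) S' = h T * dl (insert s T) S'" for T S'
  proof (cases "h T = 0")
    case False
    then show ?thesis using Rop_dl_low[OF sn, of T "bt es" S'] h[OF False] bt_tri by auto
  qed simp
  have "sig (RR s h) w = (\<Sum>S'\<in>Pow {..<m}. (\<Sum>T\<in>Pow {..<m}. h T * dl (insert s T) S') * mono S' w)"
    unfolding sig_def by (intro sum.cong refl) (simp add: RR_decomp[OF hm] t1)
  also have "\<dots> = (\<Sum>S'\<in>Pow {..<m}. \<Sum>T\<in>Pow {..<m}. h T * (dl (insert s T) S' * mono S' w))"
    unfolding sum_distrib_right by (simp only: mult.assoc)
  also have "\<dots> = (\<Sum>T\<in>Pow {..<m}. \<Sum>S'\<in>Pow {..<m}. h T * (dl (insert s T) S' * mono S' w))"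
    by (rule sum.swap)
  also have "\<dots> = (\<Sum>T\<in>Pow {..<m}. h T * (\<Sum>S'\<in>Pow {..<m}. dl (insert s T) S' * mono S' w))"
    by (simp only: sum_distrib_left)
  also have "\<dots> = (\<Sum>T\<in>Pow {..<m}. h T * word (es!s # msl T) w)"
  proof (intro sum.cong refl)
    fix T assume T: "T \<in> Pow {..<m}"
    show "h T * (\<Sum>S'\<in>Pow {..<m}. dl (insert s T) S' * mono S' w) = h T * word (es!s # msl T) w"
    proof (cases "h T = 0")
      case False
      have fT: "finite T" using T finite_subset by auto
      have "(\<Sum>S'\<in>Pow {..<m}. dl (insert s T) S' * mono S' w) = mono (insert s T) w"
      proof -
        have "insert s T \<subseteq> {..<m}" using T s by auto
        from sig_dl[OF this] show ?thesis unfolding sig_def by (rule fun_cong)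
      qed
      also have "\<dots> = word (es!s # msl T) w"
        unfolding mono_def using msl_insert[OF fT] h[OF False] by simp
      finally show ?thesis by simp
    qed simp
  qed
  also have "\<dots> = fmul (word [es!s]) (sig h) w"
    unfolding sig_def lm_sum lm_scale mono_def lm_word by simp
  finally show "sig (RR s h) w = fmul (word [es!s]) (sig h) w" .
qed

end



context clb begin

lemma K: assumes "j < m" "S \<subseteq> {..<m}"
  shows "ceq (word (es!j # msl S)) (sig (RR j (dl S)))"
  using assms
proof (induction "card S" arbitrary: S j rule: less_induct)
  case less
  have jn: "j < length es" using less.prems mle by simp
  have fS: "finite S" using less.prems(2) finite_subset by auto
  show ?case
  proof (cases "S = {}")
    case True
    have "RR j (dl S) = dl {j}"
      using Rop_dl_low[OF jn, of S "bt es"] True bt_tri by (intro ext) auto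
    moreover have "sig (dl {j}) = word [es!j]"
      using sig_dl[of "{j}"] less.prems by (simp add: mono_def msl_def)
    ultimately show ?thesis using True by (simp add: msl_def ceq_refl)
  next
    case False
    define s where "s = Min S"
    have sS: "s \<in> S" using False fS by (simp add: s_def)
    have smin: "\<And>t. t \<in> S \<Longrightarrow> s \<le> t" using fS by (simp add: s_def)
    define S' where "S' = S - {s}"
    have S'gt: "\<And>t. t \<in> S' \<Longrightarrow> s < t" using smin by (force simp: S'_def)
    have SS': "S = insert s S'" using sS by (auto simp: S'_def)
    have fS': "finite S'" using fS by (simp add: S'_def)
    have mslS: "msl S = es!s # msl S'" using msl_insert[OF fS' S'gt] SS' by simp
    have sm: "s < m" using sS less.prems by auto
    have sn: "s < length es" using sm mle by simp
    consider "j < s" | "j = s" | "s < j" by linarith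
    then show ?thesis
    proof cases
      case 1
      have "RR j (dl S) = dl (insert j S)"
        using Rop_dl_low[OF jn, of S "bt es"] 1 smin bt_tri
        by (intro ext) (meson order_less_le_trans)
      moreover have "sig (dl (insert j S)) = word (es!j # msl S)"
      proof -
        have "insert j S \<subseteq> {..<m}" using less.prems by auto
        then show ?thesis using sig_dl msl_insert[OF fS, of j] 1 smin unfolding mono_def
          by (metis order_less_le_trans)
      qed
      ultimately show ?thesis by (simp add: ceq_refl)
    next
      case 2
      have "RR j (dl S) = (\<lambda>T. f (es!s) * dl S' T)"
        using Rop_dl_min[OF sn sS smin, of "bt es"] bt_tri 2 by (intro ext) (simp add: S'_def bt_def)
      moreover have "sig (\<lambda>T. f (es!s) * dl S' T) = (\<lambda>w. f (es!s) * word (msl S') w)"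
      proof -
        have "S' \<subseteq> {..<m}" using less.prems by (auto simp: S'_def)
        then show ?thesis unfolding sig_scale using sig_dl[of S'] by (simp add: mono_def)
      qed
      ultimately show ?thesis using R_sq 2 mslS by simp
    next
      case 3
      define h where "h = RR j (dl S')"
      have cardlt: "card S' < card S" using fS sS by (metis S'_def card_Diff1_less)
      have S'm: "S' \<subseteq> {..<m}" using less.prems by (auto simp: S'_def)
      have IH: "ceq (word (es!j # msl S')) (sig h)"
        unfolding h_def using less.hyps[OF cardlt less.prems(1) S'm] .
      have hsupp: "T \<subseteq> {..<m} \<and> (\<forall>t\<in>T. s < t)" if "h T \<noteq> 0" for T
      proof -
        have d: "\<And>T. dl S' T \<noteq> 0 \<Longrightarrow> T \<subseteq> S'" by (simp add: dl_def split: if_splits)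
        have "T \<subseteq> insert j S'"
          using Rop_supp[of "dl S'" S', OF d] that unfolding h_def by blast
        then show ?thesis using S'm less.prems(1) S'gt 3 by auto
      qed
      have Lsig: "sig (RR s h) = fmul (word [es!s]) (sig h)" by (rule L[OF sm hsupp])
      have dS: "dl S = RR s (dl S')"
        using Rop_dl_low[OF sn S'gt, where \<beta>="bt es"] bt_tri SS' by (intro ext) auto
      have RRj: "RR j (dl S) = (\<lambda>T. Bf (es!s) (es!j) * dl S' T - RR s h T)"
      proof (rule ext)
        fix T
        have bteq: "bt es s j + bt es j s = Bf (es!s) (es!j)" using 3 by (simp add: bt_def)
        have A: "RR j (RR s (dl S')) T + RR s h T = Bf (es!s) (es!j) * dl S' T"
          using R_anti[OF jn sn, of "bt es" "dl S'" T] unfolding bteq h_def .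
        show "RR j (dl S) T = Bf (es!s) (es!j) * dl S' T - RR s h T"
          unfolding dS using A by (simp add: eq_diff_eq)
      qed
      have sigR: "sig (RR j (dl S)) = (\<lambda>w. Bf (es!s) (es!j) * word (msl S') w - fmul (word [es!s]) (sig h) w)"
        unfolding RRj sig_diff sig_scale Lsig[symmetric] using sig_dl[OF S'm] by (simp add: mono_def)
      have c1: "ceq (word (es!j # es!s # msl S')) (\<lambda>w. Bf (es!j) (es!s) * word (msl S') w - word (es!s # es!j # msl S') w)"
        by (rule R_anticomm)
      have c2: "ceq (word (es!s # es!j # msl S')) (fmul (word [es!s]) (sig h))"
        using ceq_lm[OF IH, of "[es!s]"] by (simp add: lm_word)
      have "ceq (word (es!j # es!s # msl S')) (\<lambda>w. Bf (es!j) (es!s) * word (msl S') w - fmul (word [es!s]) (sig h) w)"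
        by (rule ceq_trans[OF c1 ceq_diff[OF ceq_refl c2]])
      then show ?thesis unfolding sigR mslS by (simp add: Bf_sym)
    qed
  qed
qed

end



context clb begin

definition Jset :: "'v set \<Rightarrow> nat set" where
  "Jset B' = {j. j < length es \<and> es!j \<in> B'}"

lemma crd_zero: assumes "B' \<subseteq> set es" "v \<in> span B'" "es!j \<notin> B'"
  shows "crd es v j = 0"
proof -
  have "representation (set es) v = representation B' v"
    by (rule representation_extend[OF ind assms(2,1)])
  moreover have "representation B' v (es!j) = 0" using representation_ne_zero[of B' v "es!j"] assms(3) by blast
  ultimately show ?thesis by (simp add: crd_def)
qed

lemma rho_supp: assumes "B' \<subseteq> set es" "v \<in> span B'" "\<And>T. g T \<noteq> 0 \<Longrightarrow> T \<subseteq> Jset B'"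
    "rho es v g T \<noteq> 0"
  shows "T \<subseteq> Jset B'"
proof -
  obtain j where j: "j \<in> {..<length es}" "crd es v j * RR j g T \<noteq> 0"
    using assms(4) unfolding rho_def by (meson sum.not_neutral_contains_not_neutral)
  then have "es!j \<in> B'" using crd_zero[OF assms(1,2)] by fastforce
  then have jJ: "j \<in> Jset B'" using j by (simp add: Jset_def)
  have "RR j g T \<noteq> 0" using j(2) by simp
  then have "T \<subseteq> insert j (Jset B')" using Rop_supp[where g=g and A="Jset B'"] assms(3) by blast
  then show ?thesis using jJ by auto
qed

lemma rhow_supp: assumes "B' \<subseteq> set es" "set ws \<subseteq> span B'" "\<And>T. g T \<noteq> 0 \<Longrightarrow> T \<subseteq> Jset B'"
  shows "rhow es ws g T \<noteq> 0 \<Longrightarrow> T \<subseteq> Jset B'"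
  using assms(2)
proof (induction ws arbitrary: T)
  case Nil then show ?case using assms(3) by simp
next
  case (Cons v ws)
  show ?case using rho_supp[OF assms(1), of v "rhow es ws g" T] Cons by auto
qed

lemma dl_empty_supp: "dl {} T \<noteq> 0 \<Longrightarrow> T \<subseteq> A"
  by (simp add: dl_def split: if_splits)

lemma Phi_supp: assumes "B' \<subseteq> set es" "fin_supp p" "\<And>w. p w \<noteq> 0 \<Longrightarrow> set w \<subseteq> span B'"
    "Phi es p (dl {}) T \<noteq> 0"
  shows "T \<subseteq> Jset B'"
proof -
  let ?A = "{w. p w \<noteq> 0}"
  obtain w where w: "p w \<noteq> 0" "rhow es w (dl {}) T \<noteq> 0"
  proof -
    obtain w where "w \<in> ?A" "p w * rhow es w (dl {}) T \<noteq> 0"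
      using assms(4) unfolding Phi_def by (rule sum.not_neutral_contains_not_neutral)
    then show ?thesis using that by simp
  qed
  show ?thesis by (rule rhow_supp[OF assms(1) assms(3)[OF w(1)] dl_empty_supp w(2)])
qed

lemma take_idx: assumes "j < length es" "es!j \<in> set (take m es)" shows "j < m"
proof -
  obtain i where i: "i < length (take m es)" "take m es ! i = es!j"
    using assms(2) by (auto simp: in_set_conv_nth)
  then have "es!i = es!j" "i < length es" by auto
  then have "i = j" using nth_eq_iff_index_eq[OF dist _ assms(1)] by simp
  then show ?thesis using i(1) by simp
qed

lemma Jset_U: "Jset (set (take m es)) = {..<m}"
proof
  show "Jset (set (take m es)) \<subseteq> {..<m}" using take_idx by (auto simp: Jset_def)
  show "{..<m} \<subseteq> Jset (set (take m es))"
  proof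
    fix j assume "j \<in> {..<m}"
    then have "j < m" "j < length es" using mle by auto
    then show "j \<in> Jset (set (take m es))"
      unfolding Jset_def by (auto simp: in_set_conv_nth intro!: exI[of _ j])
  qed
qed

lemma setU_sub: "set (take m es) \<subseteq> set es"
  by (simp add: set_take_subset)

lemma crd_U: assumes "v \<in> span (set (take m es))" "j < length es" "\<not> j < m"
  shows "crd es v j = 0"
  using crd_zero[OF setU_sub assms(1)] take_idx assms(2,3) by blast

lemma rho_U: assumes "v \<in> span (set (take m es))"
  shows "rho es v g T = (\<Sum>j<m. crd es v j * RR j g T)"
  unfolding rho_def
  by (rule sum.mono_neutral_right) (use mle crd_U[OF assms] in auto)

lemma vexp_U: assumes "v \<in> span (set (take m es))"
  shows "v = (\<Sum>j<m. scale (crd es v j) (es!j))"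
proof -
  have "v \<in> span (set es)" using assms span_mono[OF setU_sub] by auto
  then have "v = (\<Sum>j<length es. scale (crd es v j) (es!j))" by (rule vec_expand[OF ind dist])
  also have "\<dots> = (\<Sum>j<m. scale (crd es v j) (es!j))"
    by (rule sum.mono_neutral_right) (use mle crd_U[OF assms] in auto)
  finally show ?thesis .
qed

lemma SP: "set ws \<subseteq> span (set (take m es)) \<Longrightarrow> ceq (word ws) (sig (rhow es ws (dl {})))"
proof (induction ws)
  case Nil
  have "sig (dl {}) = word []" using sig_dl[of "{}"] by (simp add: mono_def msl_def)
  then show ?case by (simp add: ceq_refl)
next
  case (Cons v ws)
  let ?g = "rhow es ws (dl {})"
  let ?c = "crd es v"
  have vU: "v \<in> span (set (take m es))" and wsU: "set ws \<subseteq> span (set (take m es))" using Cons.prems by auto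
  have IH: "ceq (word ws) (sig ?g)" using Cons.IH wsU .
  have gsupp: "\<And>T. ?g T \<noteq> 0 \<Longrightarrow> T \<subseteq> {..<m}"
    using rhow_supp[OF setU_sub wsU dl_empty_supp] unfolding Jset_U by blast
  have s1: "ceq (word (v # ws)) (\<lambda>w. \<Sum>j<m. ?c j * word (es!j # ws) w)"
    using R_lin_l[where K="{..<m}" and c="?c" and x="\<lambda>j. es!j" and l=ws] vexp_U[OF vU] by simp
  have s2: "ceq (word (es!j # ws)) (\<lambda>u. \<Sum>S\<in>Pow {..<m}. ?g S * sig (RR j (dl S)) u)" if j: "j < m" for j
  proof -
    have "ceq (word (es!j # ws)) (fmul (word [es!j]) (sig ?g))"
      using ceq_lm[OF IH, of "[es!j]"] by (simp add: lm_word)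
    also have "fmul (word [es!j]) (sig ?g) = (\<lambda>u. \<Sum>S\<in>Pow {..<m}. ?g S * word (es!j # msl S) u)"
      unfolding sig_def lm_sum lm_scale mono_def lm_word by simp
    finally have a: "ceq (word (es!j # ws)) (\<lambda>u. \<Sum>S\<in>Pow {..<m}. ?g S * word (es!j # msl S) u)" .
    have b: "ceq (\<lambda>u. \<Sum>S\<in>Pow {..<m}. ?g S * word (es!j # msl S) u) (\<lambda>u. \<Sum>S\<in>Pow {..<m}. ?g S * sig (RR j (dl S)) u)"
      by (intro ceq_sum ceq_scale K j) auto
    show ?thesis by (rule ceq_trans[OF a b])
  qed
  have s3: "sig (rhow es (v # ws) (dl {})) = (\<lambda>w. \<Sum>j<m. ?c j * (\<Sum>S\<in>Pow {..<m}. ?g S * sig (RR j (dl S)) w))"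
  proof -
    have "rhow es (v # ws) (dl {}) = (\<lambda>T. \<Sum>j<m. ?c j * (\<Sum>S\<in>Pow {..<m}. ?g S * RR j (dl S) T))"
      by (rule ext) (simp add: rho_U[OF vU] RR_decomp[OF gsupp])
    then show ?thesis by (simp add: sig_sum sig_scale)
  qed
  have "ceq (word (v # ws)) (\<lambda>w. \<Sum>j<m. ?c j * (\<Sum>S\<in>Pow {..<m}. ?g S * sig (RR j (dl S)) w))"
    by (rule ceq_trans[OF s1 ceq_sum[OF ceq_scale[OF s2]]]) auto
  then show ?case unfolding s3 .
qed

lemma FIN: assumes "fin_supp p" "\<And>w. p w \<noteq> 0 \<Longrightarrow> set w \<subseteq> span (set (take m es))"
  shows "ceq p (sig (Phi es p (dl {})))"
proof -
  let ?A = "{w. p w \<noteq> 0}"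
  have fA: "finite ?A" using assms(1) by (simp add: fin_supp_def)
  have pe: "p = (\<lambda>u. \<Sum>w\<in>?A. p w * word w u)"
  proof (rule ext)
    fix u
    have "(\<Sum>w\<in>?A. p w * word w u) = (\<Sum>w\<in>?A. if w = u then p w else 0)"
      by (intro sum.cong refl) (auto simp: word_def)
    also have "\<dots> = p u" using fA by (simp add: sum.delta')
    finally show "p u = (\<Sum>w\<in>?A. p w * word w u)" by simp
  qed
  have "ceq (\<lambda>u. \<Sum>w\<in>?A. p w * word w u) (\<lambda>u. \<Sum>w\<in>?A. p w * sig (rhow es w (dl {})) u)"
    by (intro ceq_sum ceq_scale SP assms(2)) auto
  moreover have "sig (Phi es p (dl {})) = (\<lambda>u. \<Sum>w\<in>?A. p w * sig (rhow es w (dl {})) u)"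
    unfolding Phi_def by (simp add: sig_sum sig_scale)
  ultimately show ?thesis using pe by simp
qed

end



context vector_space begin

lemma indep_union: assumes "finite B" "independent A" "independent B" "span A \<inter> span B \<subseteq> {0}"
  shows "independent (A \<union> B)"
  using assms
proof (induction B rule: finite_induct)
  case empty then show ?case by simp
next
  case (insert b F)
  have iF: "independent F" using insert.prems(2) by (rule independent_mono) auto
  have bF: "b \<notin> span F" using insert.prems(2) insert.hyps(2) by (simp add: independent_insert)
  have sF: "span A \<inter> span F \<subseteq> {0}" using insert.prems(3) span_mono[of F "insert b F"] by blast
  have IH: "independent (A \<union> F)" using insert.IH[OF insert.prems(1) iF sF] .
  have "b \<notin> span (A \<union> F)"
  proof
    assume "b \<in> span (A \<union> F)"
    then obtain x y where xy: "b = x + y" "x \<in> span A" "y \<in> span F" by (auto simp: span_Un)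
    have "x = b - y" using xy by (simp add: algebra_simps)
    moreover have "b - y \<in> span (insert b F)"
      using span_diff[OF span_base[of b "insert b F"]] span_mono[of F "insert b F"] xy(3) by auto
    ultimately have "x = 0" using xy(2) insert.prems(3) by auto
    then show False using xy bF by simp
  qed
  then show ?case using IH by (simp add: independent_insertI)
qed

lemma dim_strict: assumes "subspace A" "A \<subseteq> B" "B \<subseteq> span L" "finite L" "x \<in> B" "x \<notin> A"
  shows "dim A < dim B"
proof -
  obtain BA where BA: "BA \<subseteq> A" "independent BA" "A \<subseteq> span BA" "card BA = dim A" by (rule basis_exists)
  obtain BB where BB: "BB \<subseteq> B" "independent BB" "B \<subseteq> span BB" "card BB = dim B" by (rule basis_exists)
  have "span BA \<subseteq> A" using span_minimal[OF BA(1) assms(1)] .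
  then have xs: "x \<notin> span BA" using assms(6) by auto
  have ii: "independent (insert x BA)" using independent_insertI[OF xs BA(2)] .
  have fBB: "finite BB" using independent_span_bound[OF assms(4) BB(2)] BB(1) assms(3) by auto
  have "insert x BA \<subseteq> span BB" using BB(3) BA(1) assms(2,5) by auto
  then have c: "finite (insert x BA) \<and> card (insert x BA) \<le> card BB"
    using independent_span_bound[OF fBB ii] by auto
  have "x \<notin> BA" using xs span_base by blast
  then have "card (insert x BA) = Suc (card BA)" using c by simp
  then show ?thesis using c BA(4) BB(4) by simp
qed

lemma chain: assumes "\<And>i. subspace (V i)" "\<And>i. V (Suc i) \<subseteq> V i" "(\<Inter>i. V i) = {0}" "finite L"
  shows "\<exists>i. span L \<inter> V i \<subseteq> {0}"
proof -
  define D where "D i = span L \<inter> V i" for i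
  have sD: "subspace (D i)" for i unfolding D_def by (intro subspace_inter subspace_span assms(1))
  have anti: "i \<le> j \<Longrightarrow> V j \<subseteq> V i" for i j using lift_Suc_antimono_le[of V, OF assms(2)] by blast
  define d where "d = (LEAST k. \<exists>i. dim (D i) = k)"
  have "\<exists>i. dim (D i) = d" unfolding d_def by (rule LeastI_ex) auto
  then obtain i0 where i0: "dim (D i0) = d" by blast
  have dle: "d \<le> dim (D i)" for i unfolding d_def by (rule Least_le) auto
  have "D i0 \<subseteq> {0}"
  proof
    fix x assume x: "x \<in> D i0"
    show "x \<in> {0}"
    proof (rule ccontr)
      assume "x \<notin> {0}"
      then obtain j where j: "x \<notin> V j" using assms(3) by blast
      define k where "k = max i0 j"
      have "x \<notin> V k" using j anti[of j k] by (auto simp: k_def)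
      then have xk: "x \<notin> D k" by (simp add: D_def)
      have "D k \<subseteq> D i0" using anti[of i0 k] by (auto simp: D_def k_def)
      then have "dim (D k) < dim (D i0)"
        using dim_strict[OF sD _ _ assms(4) x xk] by (auto simp: D_def)
      then show False using dle[of k] i0 by simp
    qed
  qed
  then show ?thesis unfolding D_def by blast
qed

end

context cl begin

lemma cls_eq: assumes "fsub p r \<in> I" shows "cl_class scale f p = cl_class scale f r"
proof -
  have "fsub p q \<in> I \<longleftrightarrow> fsub r q \<in> I" for q
  proof
    assume "fsub p q \<in> I"
    from I_diff[OF this assms] show "fsub r q \<in> I" by (simp add: fsub_def)
  next
    assume "fsub r q \<in> I"
    from I_add[OF this assms] show "fsub p q \<in> I" by (simp add: fsub_def)
  qed
  then show ?thesis by (simp add: cl_class_def)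
qed

end



theorem lemma3:
  fixes scale :: "complex \<Rightarrow> 'v::ab_group_add \<Rightarrow> 'v"
    and f :: "'v \<Rightarrow> complex"
    and V :: "nat \<Rightarrow> 'v set"
  assumes "vector_space scale"
    and "quadratic_form scale f"
    and "\<And>i. module.subspace scale (V i)"
    and "V 0 = UNIV"
    and "\<And>i. V (Suc i) \<subseteq> V i"
    and "\<And>i. \<exists>S. finite S \<and> module.span scale (S \<union> V i) = UNIV"
    and "(\<Inter>i. V i) = {0}"
  shows "(\<Inter>i. cl_sub scale f (V i)) = cl_scalars scale f"
proof -
  have clf: "cl scale f" using assms(1,2) by (simp add: cl_def cl_axioms_def)
  interpret cl scale f by (rule clf)
  have fs_sc: "fin_supp (fsmult c (word []))" for c :: complex
  proof -
    have "{w. fsmult c (word []) w \<noteq> 0} \<subseteq> {[]}" by (auto simp: fsmult_def word_def split: if_splits)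
    then show ?thesis unfolding fin_supp_def using finite_subset by blast
  qed
  show ?thesis
  proof
    show "cl_scalars scale f \<subseteq> (\<Inter>i. cl_sub scale f (V i))"
    proof
      fix x assume "x \<in> cl_scalars scale f"
      then obtain c where c: "x = cl_class scale f (fsmult c (word []))" by (auto simp: cl_scalars_def)
      have "fsmult c (word []) \<in> {p. fin_supp p \<and> (\<forall>w. p w \<noteq> 0 \<longrightarrow> set w \<subseteq> W)}" for W
        using fs_sc by (auto simp: fsmult_def word_def split: if_splits)
      then show "x \<in> (\<Inter>i. cl_sub scale f (V i))" unfolding cl_sub_def c by blast
    qed
  next
    show "(\<Inter>i. cl_sub scale f (V i)) \<subseteq> cl_scalars scale f"
    proof
      fix x assume x: "x \<in> (\<Inter>i. cl_sub scale f (V i))"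
      then have "x \<in> cl_sub scale f (V 0)" by blast
      then obtain p0 where p0: "fin_supp p0" "x = cl_class scale f p0" by (auto simp: cl_sub_def)
      define L where "L = \<Union> (set ` {w. p0 w \<noteq> 0})"
      have finL: "finite L" using p0(1) by (simp add: L_def fin_supp_def)
      obtain i where i: "span L \<inter> V i \<subseteq> {0}" using chain[OF assms(3,5,7) finL] by blast
      from x have "x \<in> cl_sub scale f (V i)" by blast
      then obtain q where q: "fin_supp q" "\<And>w. q w \<noteq> 0 \<Longrightarrow> set w \<subseteq> V i" "x = cl_class scale f q"
        by (auto simp: cl_sub_def)
      have "q \<in> cl_class scale f q" using q(1) I_zero by (simp add: cl_class_def fsub_def)
      then have "q \<in> cl_class scale f p0" using p0(2) q(3) by simp
      then have pq: "fsub p0 q \<in> I" by (simp add: cl_class_def)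
      define Lq where "Lq = \<Union> (set ` {w. q w \<noteq> 0})"
      have finLq: "finite Lq" using q(1) by (simp add: Lq_def fin_supp_def)
      have LqV: "Lq \<subseteq> V i" using q(2) by (auto simp: Lq_def)
      obtain X where X: "finite X" "\<forall>es. independent (set es) \<and> distinct es \<and> X \<subseteq> span (set es)
         \<longrightarrow> (\<forall>g T. Phi es (fsub p0 q) g T = 0)" using I_kill[OF pq] by blast
      obtain Bu where Bu: "Bu \<subseteq> L" "independent Bu" "L \<subseteq> span Bu" by (rule maximal_independent_subset)
      obtain Bq where Bq: "Bq \<subseteq> Lq" "independent Bq" "Lq \<subseteq> span Bq" by (rule maximal_independent_subset)
      have finBu: "finite Bu" using Bu(1) finL finite_subset by blast
      have finBq: "finite Bq" using Bq(1) finLq finite_subset by blast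
      have spBq: "span Bq \<subseteq> V i"
        using span_minimal[of Bq "V i"] Bq(1) LqV assms(3) by blast
      have disj: "span Bu \<inter> span Bq \<subseteq> {0}"
        using i spBq span_mono[OF Bu(1)] by blast
      have iU: "independent (Bu \<union> Bq)" by (rule indep_union[OF finBq Bu(2) Bq(2) disj])
      define Y where "Y = Bu \<union> Bq \<union> X \<union> L \<union> Lq"
      have finY: "finite Y" using finBu finBq X(1) finL finLq by (simp add: Y_def)
      obtain B where B: "Bu \<union> Bq \<subseteq> B" "B \<subseteq> Y" "independent B" "Y \<subseteq> span B"
        using maximal_independent_subset_extend[of "Bu \<union> Bq" Y] iU by (auto simp: Y_def)
      have finB: "finite B" using B(2) finY finite_subset by blast
      obtain us where us: "set us = Bu" "distinct us" using finite_distinct_list[OF finBu] by blast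
      obtain rs where rs: "set rs = B - Bu" "distinct rs" using finite_distinct_list[of "B - Bu"] finB by blast
      define es where "es = us @ rs"
      define m where "m = length us"
      have set_es: "set es = B" using us rs B(1) by (auto simp: es_def)
      have dist_es: "distinct es" using us rs by (auto simp: es_def)
      have take_es: "take m es = us" by (simp add: es_def m_def)
      have ind_es: "independent (set es)" using set_es B(3) by simp
      have mle: "m \<le> length es" by (simp add: m_def es_def)
      have clb: "clb scale f es m"
        by (intro clb.intro clf clb_axioms.intro ind_es dist_es mle)
      interpret B: clb scale f es m by (rule clb)
      have BuU: "set (take m es) = Bu" using take_es us by simp
      have FINp: "ceq p0 (B.sig (Phi es p0 (dl {})))"
      proof (rule B.FIN[OF p0(1)])
        fix w assume "p0 w \<noteq> 0"
        then have "set w \<subseteq> L" by (auto simp: L_def)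
        then show "set w \<subseteq> span (set (take m es))" using Bu(3) BuU by blast
      qed
      have Xsp: "X \<subseteq> span (set es)" using B(4) set_es by (auto simp: Y_def)
      have eqPhi: "Phi es p0 (dl {}) T = Phi es q (dl {}) T" for T
      proof -
        have "Phi es (fsub p0 q) (dl {}) T = 0" using X(2) Xsp ind_es dist_es by blast
        then have "Phi es (\<lambda>w. p0 w - q w) (dl {}) T = 0" by (simp add: fsub_def)
        then show ?thesis unfolding Phi_diff[OF p0(1) q(1)] by simp
      qed
      have sup0: "T = {}" if "Phi es p0 (dl {}) T \<noteq> 0" for T
      proof -
        have t1: "T \<subseteq> B.Jset (set (take m es))"
        proof (rule B.Phi_supp[OF B.setU_sub p0(1)])
          fix w assume "p0 w \<noteq> 0"
          then have "set w \<subseteq> L" by (auto simp: L_def)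
          then show "set w \<subseteq> span (set (take m es))" using Bu(3) BuU by blast
        qed (rule that)
        have BqS: "Bq \<subseteq> set es" using B(1) set_es by auto
        have t2: "T \<subseteq> B.Jset Bq"
        proof (rule B.Phi_supp[OF BqS q(1)])
          fix w assume "q w \<noteq> 0"
          then have "set w \<subseteq> Lq" by (auto simp: Lq_def)
          then show "set w \<subseteq> span Bq" using Bq(3) by blast
        next
          show "Phi es q (dl {}) T \<noteq> 0" using that eqPhi[of T] by simp
        qed
        have "B.Jset Bq \<inter> {..<m} = {}"
        proof (rule ccontr)
          assume "B.Jset Bq \<inter> {..<m} \<noteq> {}"
          then obtain j where j: "j < m" "es!j \<in> Bq" by (auto simp: B.Jset_def)
          have "es!j = us!j" using j(1) by (simp add: es_def m_def nth_append)
          moreover have "us!j \<in> set us" using j(1) by (simp add: m_def)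
          ultimately have "es!j \<in> Bu" using us(1) by simp
          have "es!j \<in> span Bu" using \<open>es!j \<in> Bu\<close> by (rule span_base)
          moreover have "es!j \<in> span Bq" using j(2) by (rule span_base)
          ultimately have "es!j \<in> span Bu \<inter> span Bq" by simp
          then have "es!j = 0" using disj by auto
          then have "dependent Bu" using \<open>es!j \<in> Bu\<close> dependent_zero by simp
          then show False using Bu(2) by simp
        qed
        then show ?thesis using t1 t2 unfolding B.Jset_U by blast
      qed
      define c where "c = Phi es p0 (dl {}) {}"
      have Phic: "Phi es p0 (dl {}) = (\<lambda>T. c * dl {} T)"
      proof (rule ext)
        fix T show "Phi es p0 (dl {}) T = c * dl {} T"
          using sup0[of T] by (cases "T = {}") (auto simp: c_def dl_def)
      qed
      have "B.sig (Phi es p0 (dl {})) = (\<lambda>w. c * word [] w)"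
        unfolding Phic B.sig_scale using B.sig_dl[of "{}"] by (simp add: B.mono_def B.msl_def)
      then have "fsub p0 (fsmult c (word [])) \<in> I" using FINp by (simp add: ceq_def fsub_def fsmult_def)
      then have "x = cl_class scale f (fsmult c (word []))" using p0(2) cls_eq by simp
      then show "x \<in> cl_scalars scale f" by (simp add: cl_scalars_def)
    qed
  qed
qed


end
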